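(* Let $\rho_0\in(0,\pi/2)$ and $Q\in SO_3(\mathbb R)$. If $\bar L_i>\bar D_j$ for all $i,j\in\{1,2\}$, then $\bar L_1=\bar L_2$. If $\bar D_i>\bar L_j$ for all $i,j\in\{1,2\}$, then $\bar D_1=\bar D_2$.
   Context: $d$ is the spherical distance on the unit sphere $\mathbb S^2\subset\mathbb R^3$. $p_1=(\cos\rho_0,0,\sin\rho_0)$, $p_2=(\cos\rho_0,0,-\sin\rho_0)$, $q_1=Qp_1$, $q_2=Qp_2$; $L_1=d(p_1,q_1)$, $L_2=d(p_2,q_2)$, $D_1=d(p_1,q_2)$, $D_2=d(p_2,q_1)$; $\bar L_i=2\lceil L_i/(4\rho_0)\rceil-3$ and $\bar D_i=2\lceil D_i/(4\rho_0)-1/2\rceil-2$ for $i=1,2$. *)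

theory Defs
  imports "HOL-Analysis.Analysis"
begin

definition sph_dist :: "real^3 \<Rightarrow> real^3 \<Rightarrow> real" where
  "sph_dist x y = arccos (x \<bullet> y)"

definition SO3 :: "(real^3^3) set" where
  "SO3 = {Q. orthogonal_matrix Q \<and> det Q = 1}"

definition p1 :: "real \<Rightarrow> real^3" where
  "p1 \<rho>0 = vector [cos \<rho>0, 0, sin \<rho>0]"

definition p2 :: "real \<Rightarrow> real^3" where
  "p2 \<rho>0 = vector [cos \<rho>0, 0, - sin \<rho>0]"

definition Lbar :: "real \<Rightarrow> real \<Rightarrow> int" where
  "Lbar \<rho>0 L = 2 * \<lceil>L / (4 * \<rho>0)\<rceil> - 3"

definition Dbar :: "real \<Rightarrow> real \<Rightarrow> int" where
  "Dbar \<rho>0 D = 2 * \<lceil>D / (4 * \<rho>0) - 1/2\<rceil> - 2"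

end

theory Submission
  imports Defs
begin

lemma sph_tri:
  fixes x y z :: "'a::real_inner"
  assumes nx: "norm x = 1" and ny: "norm y = 1" and nz: "norm z = 1"
  shows "arccos (x \<bullet> z) \<le> arccos (x \<bullet> y) + arccos (y \<bullet> z)"
proof -
  define a where "a = x \<bullet> y"
  define c where "c = y \<bullet> z"
  have ba: "\<bar>a\<bar> \<le> 1" unfolding a_def using Cauchy_Schwarz_ineq2[of x y] nx ny by simp
  have bc: "\<bar>c\<bar> \<le> 1" unfolding c_def using Cauchy_Schwarz_ineq2[of y z] nz ny by simp
  have bxz: "\<bar>x \<bullet> z\<bar> \<le> 1" using Cauchy_Schwarz_ineq2[of x z] nx nz by simp
  have xx: "x \<bullet> x = 1" using nx by (simp add: norm_eq_sqrt_inner)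
  have yy: "y \<bullet> y = 1" using ny by (simp add: norm_eq_sqrt_inner)
  have zz: "z \<bullet> z = 1" using nz by (simp add: norm_eq_sqrt_inner)
  define u where "u = x - a *\<^sub>R y"
  define w where "w = z - c *\<^sub>R y"
  have uw: "u \<bullet> w = x \<bullet> z - a * c"
    unfolding u_def w_def by (simp add: inner_diff_left inner_diff_right a_def c_def yy inner_commute algebra_simps)
  have uu: "u \<bullet> u = 1 - a\<^sup>2"
    unfolding u_def by (simp add: inner_diff_left inner_diff_right a_def xx yy inner_commute algebra_simps power2_eq_square)
  have ww: "w \<bullet> w = 1 - c\<^sup>2"
    unfolding w_def by (simp add: inner_diff_left inner_diff_right c_def zz yy inner_commute algebra_simps power2_eq_square)
  have "\<bar>u \<bullet> w\<bar> \<le> norm u * norm w" by (rule Cauchy_Schwarz_ineq2)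
  moreover have "norm u = sqrt (1 - a\<^sup>2)" using uu by (simp add: norm_eq_sqrt_inner)
  moreover have "norm w = sqrt (1 - c\<^sup>2)" using ww by (simp add: norm_eq_sqrt_inner)
  ultimately have "\<bar>x \<bullet> z - a * c\<bar> \<le> sqrt (1 - a\<^sup>2) * sqrt (1 - c\<^sup>2)" using uw by simp
  hence key: "x \<bullet> z \<ge> a * c - sqrt (1 - a\<^sup>2) * sqrt (1 - c\<^sup>2)" by linarith
  define \<alpha> where "\<alpha> = arccos a"
  define \<beta> where "\<beta> = arccos c"
  have a0: "0 \<le> \<alpha>" "\<alpha> \<le> pi" unfolding \<alpha>_def using ba arccos_lbound arccos_ubound by auto
  have b0: "0 \<le> \<beta>" "\<beta> \<le> pi" unfolding \<beta>_def using bc arccos_lbound arccos_ubound by auto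
  have ub: "arccos (x \<bullet> z) \<le> pi" using bxz arccos_ubound by auto
  show ?thesis
  proof (cases "\<alpha> + \<beta> \<le> pi")
    case False
    then show ?thesis using ub unfolding \<alpha>_def \<beta>_def a_def c_def by linarith
  next
    case True
    have "cos (\<alpha> + \<beta>) = a * c - sqrt (1 - a\<^sup>2) * sqrt (1 - c\<^sup>2)"
      unfolding cos_add \<alpha>_def \<beta>_def using ba bc by (simp add: sin_arccos cos_arccos)
    hence "cos (\<alpha> + \<beta>) \<le> x \<bullet> z" using key by simp
    hence "arccos (x \<bullet> z) \<le> arccos (cos (\<alpha> + \<beta>))"
      using bxz by (intro arccos_le_arccos) (auto simp: cos_ge_minus_one)
    also have "\<dots> = \<alpha> + \<beta>" using True a0 b0 by (simp add: arccos_cos)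
    finally show ?thesis unfolding \<alpha>_def \<beta>_def a_def c_def .
  qed
qed

lemma sd_tri:
  assumes "norm x = 1" "norm y = 1" "norm z = 1"
  shows "sph_dist x z \<le> sph_dist x y + sph_dist y z"
  unfolding sph_dist_def using sph_tri assms by blast

lemma sd_sym: "sph_dist x y = sph_dist y x"
  unfolding sph_dist_def by (simp add: inner_commute)

lemma orth_inner:
  assumes "orthogonal_matrix Q"
  shows "(Q *v x) \<bullet> (Q *v y) = x \<bullet> (y::real^'n)"
proof -
  have "orthogonal_transformation ((*v) Q)"
    using assms orthogonal_transformation_matrix[of "(*v) Q"]
    by (simp add: matrix_vector_mul_linear matrix_of_matrix_vector_mul)
  thus ?thesis unfolding orthogonal_transformation_def by blast
qed

lemma norm_p1: "norm (p1 r) = 1"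
  unfolding p1_def norm_eq_sqrt_inner inner_vec_def
  by (simp add: sum_3 vector_3 power2_eq_square[symmetric])

lemma norm_p2: "norm (p2 r) = 1"
  unfolding p2_def norm_eq_sqrt_inner inner_vec_def
  by (simp add: sum_3 vector_3 power2_eq_square[symmetric])

lemma d12: assumes "0 < r" "r < pi/2" shows "sph_dist (p1 r) (p2 r) = 2 * r"
proof -
  have "p1 r \<bullet> p2 r = cos (2*r)"
    unfolding p1_def p2_def inner_vec_def
    by (simp add: sum_3 vector_3 cos_double power2_eq_square)
  thus ?thesis unfolding sph_dist_def using assms by (simp add: arccos_cos)
qed

theorem mainTheorem3:
  fixes \<rho>0 :: real and Q :: "real^3^3"
  assumes "0 < \<rho>0" and "\<rho>0 < pi / 2" and "Q \<in> SO3"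
  defines "L1 \<equiv> sph_dist (p1 \<rho>0) (Q *v p1 \<rho>0)"
      and "L2 \<equiv> sph_dist (p2 \<rho>0) (Q *v p2 \<rho>0)"
      and "D1 \<equiv> sph_dist (p1 \<rho>0) (Q *v p2 \<rho>0)"
      and "D2 \<equiv> sph_dist (p2 \<rho>0) (Q *v p1 \<rho>0)"
  shows "((\<forall>L\<in>{L1, L2}. \<forall>D\<in>{D1, D2}. Lbar \<rho>0 L > Dbar \<rho>0 D) \<longrightarrow> Lbar \<rho>0 L1 = Lbar \<rho>0 L2)
       \<and> ((\<forall>D\<in>{D1, D2}. \<forall>L\<in>{L1, L2}. Dbar \<rho>0 D > Lbar \<rho>0 L) \<longrightarrow> Dbar \<rho>0 D1 = Dbar \<rho>0 D2)"
proof -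
  have oQ: "orthogonal_matrix Q" using assms(3) unfolding SO3_def by auto
  have nQ: "norm (Q *v v) = 1" if "norm v = 1" for v :: "real^3"
    using orth_inner[OF oQ, of v v] that by (simp add: norm_eq_sqrt_inner)
  have dQ: "sph_dist (Q *v p1 \<rho>0) (Q *v p2 \<rho>0) = 2 * \<rho>0"
    unfolding sph_dist_def orth_inner[OF oQ] using d12[OF assms(1,2)] unfolding sph_dist_def .
  note d = d12[OF assms(1,2)]
  note n = norm_p1[of \<rho>0] norm_p2[of \<rho>0] nQ[OF norm_p1[of \<rho>0]] nQ[OF norm_p2[of \<rho>0]]
  have b11: "\<bar>L1 - D1\<bar> \<le> 2*\<rho>0"
    using sd_tri[OF n(1) n(4) n(3)] sd_tri[OF n(1) n(3) n(4)] dQ sd_sym[of "Q *v p1 \<rho>0" "Q *v p2 \<rho>0"]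
    unfolding L1_def D1_def by linarith
  have b12: "\<bar>L1 - D2\<bar> \<le> 2*\<rho>0"
    using sd_tri[OF n(1) n(2) n(3)] sd_tri[OF n(2) n(1) n(3)] d sd_sym[of "p2 \<rho>0" "p1 \<rho>0"]
    unfolding L1_def D2_def by linarith
  have b21: "\<bar>L2 - D1\<bar> \<le> 2*\<rho>0"
    using sd_tri[OF n(2) n(1) n(4)] sd_tri[OF n(1) n(2) n(4)] d sd_sym[of "p2 \<rho>0" "p1 \<rho>0"]
    unfolding L2_def D1_def by linarith
  have b22: "\<bar>L2 - D2\<bar> \<le> 2*\<rho>0"
    using sd_tri[OF n(2) n(3) n(4)] sd_tri[OF n(2) n(4) n(3)] dQ sd_sym[of "Q *v p1 \<rho>0" "Q *v p2 \<rho>0"]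
    unfolding L2_def D2_def by linarith
  have gen: "\<bar>L/(4*\<rho>0) - D/(4*\<rho>0)\<bar> \<le> 1/2" if "\<bar>L - D\<bar> \<le> 2*\<rho>0" for L D
  proof -
    have "\<bar>L/(4*\<rho>0) - D/(4*\<rho>0)\<bar> = \<bar>L - D\<bar> / (4*\<rho>0)" using assms(1)
      by (simp add: diff_divide_distrib[symmetric])
    also have "\<dots> \<le> (2*\<rho>0)/(4*\<rho>0)" using that assms(1) by (intro divide_right_mono) auto
    finally show ?thesis using assms(1) by simp
  qed
  define a1 where "a1 = L1/(4*\<rho>0)"
  define a2 where "a2 = L2/(4*\<rho>0)"
  define c1 where "c1 = D1/(4*\<rho>0)"
  define c2 where "c2 = D2/(4*\<rho>0)"
  have h: "\<bar>a1 - c1\<bar> \<le> 1/2" "\<bar>a1 - c2\<bar> \<le> 1/2" "\<bar>a2 - c1\<bar> \<le> 1/2" "\<bar>a2 - c2\<bar> \<le> 1/2"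
    using gen[OF b11] gen[OF b12] gen[OF b21] gen[OF b22] unfolding a1_def a2_def c1_def c2_def by auto
  have P1: "\<lceil>a1\<rceil> = \<lceil>a2\<rceil>" if
    "\<lceil>a1\<rceil> \<ge> \<lceil>c1 - 1/2\<rceil> + 1" "\<lceil>a2\<rceil> \<ge> \<lceil>c1 - 1/2\<rceil> + 1"
  proof -
    have "\<lceil>a2\<rceil> \<le> \<lceil>a1\<rceil>"
      if A: "\<lceil>a1\<rceil> \<ge> \<lceil>c1 - 1/2\<rceil> + 1" and B: "\<bar>a2 - c1\<bar> \<le> 1/2"
      for a1 a2 :: real
    proof (rule ccontr)
      assume "\<not> ?thesis"
      hence "a2 > \<lceil>a1\<rceil>" by (simp add: ceiling_le_iff)
      hence "c1 - 1/2 > \<lceil>a1\<rceil> - 1" using B by linarith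
      hence "\<lceil>c1 - 1/2\<rceil> \<ge> \<lceil>a1\<rceil>" by (simp add: le_ceiling_iff)
      thus False using A by linarith
    qed
    thus ?thesis using that h(1,3) by (meson antisym)
  qed
  have P2: "\<lceil>c1 - 1/2\<rceil> = \<lceil>c2 - 1/2\<rceil>" if
    "\<lceil>c1 - 1/2\<rceil> \<ge> \<lceil>a1\<rceil>" "\<lceil>c2 - 1/2\<rceil> \<ge> \<lceil>a1\<rceil>"
  proof -
    have "\<lceil>c2 - 1/2\<rceil> \<le> \<lceil>c1 - 1/2\<rceil>"
      if A: "\<lceil>c1 - 1/2\<rceil> \<ge> \<lceil>a1\<rceil>" and B: "\<bar>a1 - c2\<bar> \<le> 1/2"
      for c1 c2 :: real
    proof (rule ccontr)
      assume "\<not> ?thesis"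
      hence "c2 - 1/2 > \<lceil>c1 - 1/2\<rceil>" by (simp add: ceiling_le_iff)
      hence "a1 > \<lceil>c1 - 1/2\<rceil>" using B by linarith
      hence "\<lceil>a1\<rceil> \<ge> \<lceil>c1 - 1/2\<rceil> + 1" by (simp add: le_ceiling_iff)
      thus False using A by linarith
    qed
    thus ?thesis using that h(1,2) by (meson antisym)
  qed
  have i1: "(2*k - 3 > 2*m - (2::int)) = (m + 1 \<le> k)" for k m by presburger
  have i2: "(2*m - 2 > 2*k - (3::int)) = (k \<le> m)" for k m by presburger
  show ?thesis
    unfolding Lbar_def Dbar_def i1 i2
    using P1 P2 unfolding a1_def a2_def c1_def c2_def by auto
qed

end
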